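(* Let $G$ be a weighted graph as in the context. For every integer $m\geq 1$, \[q_{2m}^G(\rho)\leq\frac{3h_G^{-1}(m)}{m},\] where $\rho=\rho(G)$.
   Context: $G$ is a locally finite connected graph with at least two vertices, vertex set $V(G)$ and distinguished vertex $\rho=\rho(G)$; $\mu^G$ is a symmetric weight with $\mu^G_{xy}>0$ iff $\{x,y\}$ is an edge, $\mu^G_x:=\sum_y\mu^G_{xy}$, $\nu^G(A):=\sum_{x\in A}\mu^G_x$. The discrete time simple random walk $X^G$ has transition probabilities $P_G(x,y)=\mu^G_{xy}/\mu^G_x$ and law $\mathbf{P}^G_x$; $p^G_m(x,y):=\mathbf{P}^G_x(X^G_m=y)/\nu^G(\{y\})$, $q^G_m(x,y):=\frac12(p^G_m(x,y)+p^G_{m+1}(x,y))$, $q^G_m(x):=q^G_m(\rho,x)$. The generator is $\mathcal{L}_Gf(x)=\sum_yP_G(x,y)(f(y)-f(x))$, $(f,g)_G:=\sum_xf(x)g(x)\nu^G(\{x\})$, $\mathcal{E}_G(f,g):=-(\mathcal{L}_Gf,g)_G$, $\mathcal{F}_G:=\{f:\mathcal{E}_G(f,f)<\infty\}$. The resistance metric is \[R_G(x,y):=\sup\left\{\frac{|f(x)-f(y)|^2}{\mathcal{E}_G(f,f)}:f\in\mathcal{F}_G,\ \mathcal{E}_G(f,f)>0\right\}.\] Set $V_G(r):=\nu^G(\{x:R_G(\rho,x)\le r\})$, $h_G(r):=rV_G(r)$, and $h_G^{-1}(m):=\sup\{r:h_G(r)\le m\}$. *)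

theory Defs
  imports "HOL-Analysis.Analysis"
begin

definition wgraph :: "'a set \<Rightarrow> ('a \<Rightarrow> 'a \<Rightarrow> real) \<Rightarrow> bool" where
  "wgraph V mu \<longleftrightarrow>
     (\<forall>x y. mu x y = mu y x) \<and> (\<forall>x y. 0 \<le> mu x y) \<and>
     (\<forall>x y. 0 < mu x y \<longrightarrow> x \<in> V \<and> y \<in> V) \<and>
     (\<forall>x\<in>V. finite {y. 0 < mu x y}) \<and>
     (\<forall>x\<in>V. \<forall>y\<in>V. (x, y) \<in> {(a, b). 0 < mu a b}\<^sup>*) \<and>
     (\<exists>x\<in>V. \<exists>y\<in>V. x \<noteq> y)"

definition vweight :: "('a \<Rightarrow> 'a \<Rightarrow> real) \<Rightarrow> 'a \<Rightarrow> real" where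
  "vweight mu x = (\<Sum>y\<in>{y. 0 < mu x y}. mu x y)"

definition gmeasure :: "('a \<Rightarrow> 'a \<Rightarrow> real) \<Rightarrow> 'a set \<Rightarrow> ennreal" where
  "gmeasure mu A = (\<Sum>\<^sub>\<infinity>x\<in>A. ennreal (vweight mu x))"

definition trans_prob :: "('a \<Rightarrow> 'a \<Rightarrow> real) \<Rightarrow> 'a \<Rightarrow> 'a \<Rightarrow> real" where
  "trans_prob mu x y = mu x y / vweight mu x"

primrec step_prob :: "('a \<Rightarrow> 'a \<Rightarrow> real) \<Rightarrow> nat \<Rightarrow> 'a \<Rightarrow> 'a \<Rightarrow> real" where
  "step_prob mu 0 x y = (if x = y then 1 else 0)"
| "step_prob mu (Suc n) x y = (\<Sum>z\<in>{z. 0 < mu x z}. trans_prob mu x z * step_prob mu n z y)"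

definition heat_kernel :: "('a \<Rightarrow> 'a \<Rightarrow> real) \<Rightarrow> nat \<Rightarrow> 'a \<Rightarrow> 'a \<Rightarrow> real" where
  "heat_kernel mu m x y = step_prob mu m x y / vweight mu y"

definition qkernel :: "('a \<Rightarrow> 'a \<Rightarrow> real) \<Rightarrow> nat \<Rightarrow> 'a \<Rightarrow> 'a \<Rightarrow> real" where
  "qkernel mu m x y = (heat_kernel mu m x y + heat_kernel mu (Suc m) x y) / 2"

definition energy :: "('a \<Rightarrow> 'a \<Rightarrow> real) \<Rightarrow> ('a \<Rightarrow> real) \<Rightarrow> ennreal" where
  "energy mu f = (\<Sum>\<^sub>\<infinity>p\<in>UNIV. ennreal (mu (fst p) (snd p) * (f (fst p) - f (snd p))\<^sup>2)) / 2"

definition resistance :: "('a \<Rightarrow> 'a \<Rightarrow> real) \<Rightarrow> 'a \<Rightarrow> 'a \<Rightarrow> real" where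
  "resistance mu x y = Sup {\<bar>f x - f y\<bar>\<^sup>2 / enn2real (energy mu f) | f.
       energy mu f < \<infinity> \<and> 0 < energy mu f}"

definition ball_vol :: "'a set \<Rightarrow> ('a \<Rightarrow> 'a \<Rightarrow> real) \<Rightarrow> 'a \<Rightarrow> real \<Rightarrow> ennreal" where
  "ball_vol V mu \<rho> r = gmeasure mu {x\<in>V. resistance mu \<rho> x \<le> r}"

text \<open>h_G^{-1}(t) = sup{r : r V_G(r) \<le> t} (r \<ge> 0; negative r contribute nothing)\<close>
definition h_inv :: "'a set \<Rightarrow> ('a \<Rightarrow> 'a \<Rightarrow> real) \<Rightarrow> 'a \<Rightarrow> real \<Rightarrow> real" where
  "h_inv V mu \<rho> t = Sup {r. 0 \<le> r \<and> ennreal r * ball_vol V mu \<rho> r \<le> ennreal t}"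

end

theory Submission
  imports Defs
begin

locale wg =
  fixes V :: "'a set" and mu :: "'a \<Rightarrow> 'a \<Rightarrow> real"
  assumes wg: "wgraph V mu"
begin

abbreviation "nb x \<equiv> {y. 0 < mu x y}"
abbreviation "nu \<equiv> vweight mu"
abbreviation "sp \<equiv> step_prob mu"
abbreviation "tp \<equiv> trans_prob mu"

lemma msym: "mu x y = mu y x" using wg unfolding wgraph_def by blast
lemma mnn: "0 \<le> mu x y" using wg unfolding wgraph_def by blast
lemma minV: "0 < mu x y \<Longrightarrow> x \<in> V \<and> y \<in> V" using wg unfolding wgraph_def by blast
lemma fin_nb: "finite (nb x)"
proof (cases "x \<in> V")
  case True then show ?thesis using wg unfolding wgraph_def by blast
next
  case False then have "nb x = {}" using minV by blast
  then show ?thesis by simp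
qed

lemma m0: "\<not> 0 < mu x y \<Longrightarrow> mu x y = 0" using mnn[of x y] by linarith

lemma nu_nn: "0 \<le> nu x" unfolding vweight_def by (rule sum_nonneg) auto

lemma nu_ge: "0 < mu x y \<Longrightarrow> mu x y \<le> nu x"
  unfolding vweight_def by (rule member_le_sum) (auto simp: fin_nb)

lemma nu_pos: "0 < mu x y \<Longrightarrow> 0 < nu x" using nu_ge by fastforce

lemma nu_tp: "nu x * tp x y = mu x y"
proof (cases "nu x = 0")
  case True
  then have "mu x y = 0" using nu_pos m0 by fastforce
  then show ?thesis by (simp add: trans_prob_def)
qed (simp add: trans_prob_def)

lemma tp_nn: "0 \<le> tp x y" unfolding trans_prob_def using mnn nu_nn by simp

lemma tp0: "\<not> 0 < mu x y \<Longrightarrow> tp x y = 0" using m0 by (simp add: trans_prob_def)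

lemma sp_nn: "0 \<le> sp n x y"
  by (induction n arbitrary: x) (auto intro!: sum_nonneg mult_nonneg_nonneg tp_nn)

primrec reach :: "nat \<Rightarrow> 'a \<Rightarrow> 'a set" where
  "reach 0 x = {x}"
| "reach (Suc n) x = (\<Union>z\<in>nb x. reach n z)"

lemma fin_reach: "finite (reach n x)"
  by (induction n arbitrary: x) (auto simp: fin_nb)

lemma sp_supp: "sp n x y \<noteq> 0 \<Longrightarrow> y \<in> reach n x"
proof (induction n arbitrary: x)
  case 0 then show ?case by (auto split: if_splits)
next
  case (Suc n)
  then have "(\<Sum>z\<in>nb x. tp x z * sp n z y) \<noteq> 0" by simp
  then obtain z where "z \<in> nb x" "tp x z * sp n z y \<noteq> 0"
    by (meson sum.neutral)
  then show ?case using Suc.IH by auto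
qed

lemma reach_step: "z \<in> reach n x \<Longrightarrow> 0 < mu z y \<Longrightarrow> y \<in> reach (Suc n) x"
proof (induction n arbitrary: x)
  case 0 then show ?case by auto
next
  case (Suc n)
  then obtain w where "w \<in> nb x" "z \<in> reach n w" by auto
  then show ?case using Suc.IH[of w] Suc.prems by auto
qed

lemma reach_sub: "z \<in> nb x \<Longrightarrow> reach n z \<subseteq> reach (Suc n) x" by auto

lemma ck: "sp (a+b) x y = (\<Sum>z\<in>reach a x. sp a x z * sp b z y)"
proof (induction a arbitrary: x)
  case 0 then show ?case by simp
next
  case (Suc a)
  have "sp (Suc a + b) x y = (\<Sum>z\<in>nb x. tp x z * sp (a+b) z y)" by simp
  also have "\<dots> = (\<Sum>z\<in>nb x. tp x z * (\<Sum>w\<in>reach (Suc a) x. sp a z w * sp b w y))"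
  proof (rule sum.cong[OF refl])
    fix z assume z: "z \<in> nb x"
    have "(\<Sum>w\<in>reach a z. sp a z w * sp b w y) = (\<Sum>w\<in>reach (Suc a) x. sp a z w * sp b w y)"
    proof (rule sum.mono_neutral_left)
      show "finite (reach (Suc a) x)" by (rule fin_reach)
      show "reach a z \<subseteq> reach (Suc a) x" using z by (rule reach_sub)
      show "\<forall>i\<in>reach (Suc a) x - reach a z. sp a z i * sp b i y = 0"
      proof
        fix i assume "i \<in> reach (Suc a) x - reach a z"
        then have "sp a z i = 0" using sp_supp by blast
        then show "sp a z i * sp b i y = 0" by simp
      qed
    qed
    then show "tp x z * sp (a+b) z y = tp x z * (\<Sum>w\<in>reach (Suc a) x. sp a z w * sp b w y)"
      using Suc.IH by simp
  qed
  also have "\<dots> = (\<Sum>w\<in>reach (Suc a) x. (\<Sum>z\<in>nb x. tp x z * sp a z w) * sp b w y)"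
    by (simp add: sum_distrib_left sum_distrib_right sum.swap[of _ "nb x"] mult.assoc)
  also have "\<dots> = (\<Sum>w\<in>reach (Suc a) x. sp (Suc a) x w * sp b w y)" by simp
  finally show ?case .
qed

lemma sp_one: "sp (Suc 0) z y = tp z y"
proof -
  have "sp (Suc 0) z y = (\<Sum>w\<in>nb z. if w = y then tp z w else 0)"
    by (auto intro!: sum.cong)
  also have "\<dots> = (if y \<in> nb z then tp z y else 0)" by (simp add: sum.delta' fin_nb)
  also have "\<dots> = tp z y" using tp0 by auto
  finally show ?thesis .
qed

lemma sp_back: "sp (Suc n) x y = (\<Sum>z\<in>reach n x. sp n x z * tp z y)"
proof -
  have "sp (Suc n) x y = sp (n + Suc 0) x y" by simp
  also have "\<dots> = (\<Sum>z\<in>reach n x. sp n x z * sp (Suc 0) z y)" by (rule ck)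
  also have "\<dots> = (\<Sum>z\<in>reach n x. sp n x z * tp z y)" by (simp only: sp_one)
  finally show ?thesis .
qed

lemma rev: "nu x * sp n x y = nu y * sp n y x"
proof (induction n arbitrary: x y)
  case 0 then show ?case by simp
next
  case (Suc n)
  have "nu x * sp (Suc n) x y = (\<Sum>z\<in>nb x. mu x z * sp n z y)"
    by (simp add: sum_distrib_left mult.assoc[symmetric] nu_tp)
  also have "\<dots> = (\<Sum>z\<in>nb x \<union> reach n y. mu x z * sp n z y)"
    by (rule sum.mono_neutral_left) (auto simp: fin_nb fin_reach m0)
  also have "\<dots> = (\<Sum>z\<in>reach n y. mu x z * sp n z y)"
  proof (rule sum.mono_neutral_right)
    show "\<forall>z\<in>nb x \<union> reach n y - reach n y. mu x z * sp n z y = 0"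
    proof
      fix z assume "z \<in> nb x \<union> reach n y - reach n y"
      then have "sp n y z = 0" using sp_supp by blast
      have "mu x z * sp n z y = tp z x * (nu z * sp n z y)"
        by (metis msym mult.assoc mult.commute nu_tp)
      also have "\<dots> = 0" using Suc.IH[of z y] \<open>sp n y z = 0\<close> by simp
      finally show "mu x z * sp n z y = 0" .
    qed
  qed (auto simp: fin_nb fin_reach)
  also have "\<dots> = (\<Sum>z\<in>reach n y. tp z x * (nu z * sp n z y))"
    by (rule sum.cong[OF refl]) (metis msym mult.assoc mult.commute nu_tp)
  also have "\<dots> = (\<Sum>z\<in>reach n y. tp z x * (nu y * sp n y z))"
    using Suc.IH by simp
  also have "\<dots> = nu y * (\<Sum>z\<in>reach n y. sp n y z * tp z x)"
    by (simp add: sum_distrib_left mult_ac)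
  also have "\<dots> = nu y * sp (Suc n) y x" by (simp only: sp_back)
  finally show ?case .
qed

end


context wg begin

definition ip :: "'a set \<Rightarrow> ('a \<Rightarrow> real) \<Rightarrow> ('a \<Rightarrow> real) \<Rightarrow> real" where
  "ip T u v = (\<Sum>x\<in>T. u x * v x * nu x)"
definition pf :: "'a set \<Rightarrow> ('a \<Rightarrow> real) \<Rightarrow> ('a \<Rightarrow> real) \<Rightarrow> real" where
  "pf T u v = (\<Sum>x\<in>T. \<Sum>y\<in>T. mu x y * u x * v y)"

lemma form:
  assumes T: "finite T" and supp: "\<And>x. u x \<noteq> 0 \<Longrightarrow> nb x \<subseteq> T"
  shows "ip T u u - pf T u u = (\<Sum>x\<in>T. \<Sum>y\<in>T. mu x y * (u x - u y)\<^sup>2) / 2"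
    and "ip T u u + pf T u u = (\<Sum>x\<in>T. \<Sum>y\<in>T. mu x y * (u x + u y)\<^sup>2) / 2"
proof -
  have A: "ip T u u = (\<Sum>x\<in>T. \<Sum>y\<in>T. mu x y * (u x)\<^sup>2)"
    unfolding ip_def
  proof (rule sum.cong[OF refl])
    fix x assume "x \<in> T"
    show "u x * u x * nu x = (\<Sum>y\<in>T. mu x y * (u x)\<^sup>2)"
    proof (cases "u x = 0")
      case False
      then have "nb x \<subseteq> T" by (rule supp)
      then have "nu x = (\<Sum>y\<in>T. mu x y)" unfolding vweight_def
        by (intro sum.mono_neutral_left) (auto simp: T m0)
      then show ?thesis by (simp add: sum_distrib_left power2_eq_square mult_ac)
    qed simp
  qed
  have B: "(\<Sum>x\<in>T. \<Sum>y\<in>T. mu x y * (u y)\<^sup>2) = ip T u u"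
    unfolding A by (subst sum.swap) (simp add: msym)
  have "(\<Sum>x\<in>T. \<Sum>y\<in>T. mu x y * (u x - u y)\<^sup>2) =
      (\<Sum>x\<in>T. \<Sum>y\<in>T. mu x y * (u x)\<^sup>2) + (\<Sum>x\<in>T. \<Sum>y\<in>T. mu x y * (u y)\<^sup>2)
      - 2 * pf T u u"
    unfolding pf_def
    by (simp add: sum.distrib sum_subtractf sum_distrib_left power2_diff algebra_simps)
  then show "ip T u u - pf T u u = (\<Sum>x\<in>T. \<Sum>y\<in>T. mu x y * (u x - u y)\<^sup>2) / 2"
    using A B by simp
  have "(\<Sum>x\<in>T. \<Sum>y\<in>T. mu x y * (u x + u y)\<^sup>2) =
      (\<Sum>x\<in>T. \<Sum>y\<in>T. mu x y * (u x)\<^sup>2) + (\<Sum>x\<in>T. \<Sum>y\<in>T. mu x y * (u y)\<^sup>2)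
      + 2 * pf T u u"
    unfolding pf_def
    by (simp add: sum.distrib sum_distrib_left power2_sum algebra_simps)
  then show "ip T u u + pf T u u = (\<Sum>x\<in>T. \<Sum>y\<in>T. mu x y * (u x + u y)\<^sup>2) / 2"
    using A B by simp
qed

lemma form_nn:
  assumes T: "finite T" and supp: "\<And>x. u x \<noteq> 0 \<Longrightarrow> nb x \<subseteq> T"
  shows "0 \<le> ip T u u - pf T u u" "0 \<le> ip T u u + pf T u u"
proof -
  have "0 \<le> (\<Sum>x\<in>T. \<Sum>y\<in>T. mu x y * (u x - u y)\<^sup>2)"
       "0 \<le> (\<Sum>x\<in>T. \<Sum>y\<in>T. mu x y * (u x + u y)\<^sup>2)"
    by (auto intro!: sum_nonneg mult_nonneg_nonneg mnn)
  moreover have "ip T u u - pf T u u = (\<Sum>x\<in>T. \<Sum>y\<in>T. mu x y * (u x - u y)\<^sup>2) / 2"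
    by (rule form(1)[OF T supp])
  moreover have "ip T u u + pf T u u = (\<Sum>x\<in>T. \<Sum>y\<in>T. mu x y * (u x + u y)\<^sup>2) / 2"
    by (rule form(2)[OF T supp])
  ultimately show "0 \<le> ip T u u - pf T u u" "0 \<le> ip T u u + pf T u u" by simp_all
qed

lemma energy_fin:
  assumes T: "finite T" and supp: "\<And>x. u x \<noteq> 0 \<Longrightarrow> x \<in> T \<and> nb x \<subseteq> T"
  shows "energy mu u = ennreal ((\<Sum>x\<in>T. \<Sum>y\<in>T. mu x y * (u x - u y)\<^sup>2) / 2)"
proof -
  let ?h = "\<lambda>p. ennreal (mu (fst p) (snd p) * (u (fst p) - u (snd p))\<^sup>2)"
  have "infsum ?h UNIV = infsum ?h (T \<times> T)"
  proof (rule infsum_cong_neutral)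
    fix p assume p: "p \<in> UNIV - T \<times> T"
    obtain x y where xy: "p = (x, y)" by force
    show "?h p = 0"
    proof (cases "0 < mu x y")
      case True
      have "u x = 0"
      proof (rule ccontr)
        assume "u x \<noteq> 0" then have "x \<in> T \<and> nb x \<subseteq> T" by (rule supp)
        then show False using p xy True by auto
      qed
      moreover have "u y = 0"
      proof (rule ccontr)
        assume "u y \<noteq> 0" then have "y \<in> T \<and> nb y \<subseteq> T" by (rule supp)
        then show False using p xy True msym[of x y] by auto
      qed
      ultimately show ?thesis using xy by simp
    next
      case False then show ?thesis using xy m0 by simp
    qed
  qed auto
  also have "\<dots> = (\<Sum>p\<in>T \<times> T. ?h p)" using T by simp
  also have "\<dots> = ennreal (\<Sum>p\<in>T \<times> T. mu (fst p) (snd p) * (u (fst p) - u (snd p))\<^sup>2)"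
    by (rule sum_ennreal) (auto intro!: mult_nonneg_nonneg mnn)
  also have "(\<Sum>p\<in>T \<times> T. mu (fst p) (snd p) * (u (fst p) - u (snd p))\<^sup>2)
      = (\<Sum>x\<in>T. \<Sum>y\<in>T. mu x y * (u x - u y)\<^sup>2)"
    by (simp add: sum.cartesian_product split_def)
  finally have "infsum ?h UNIV = ennreal (\<Sum>x\<in>T. \<Sum>y\<in>T. mu x y * (u x - u y)\<^sup>2)" .
  moreover have "0 \<le> (\<Sum>x\<in>T. \<Sum>y\<in>T. mu x y * (u x - u y)\<^sup>2)"
    by (auto intro!: sum_nonneg mult_nonneg_nonneg mnn)
  ultimately show ?thesis unfolding energy_def
    by (simp add: divide_ennreal[symmetric])
qed

lemma edge_bound:
  assumes "energy mu g < \<infinity>"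
  shows "mu y x * (g y - g x)\<^sup>2 \<le> enn2real (energy mu g)"
proof (cases "x = y")
  case True then show ?thesis by simp
next
  case False
  let ?h = "\<lambda>p. ennreal (mu (fst p) (snd p) * (g (fst p) - g (snd p))\<^sup>2)"
  define t where "t = mu y x * (g y - g x)\<^sup>2"
  have t0: "0 \<le> t" unfolding t_def by (simp add: mnn)
  have "infsum ?h {(y,x),(x,y)} = ?h (y,x) + ?h (x,y)" using False by simp
  also have "\<dots> = 2 * ennreal t"
    unfolding t_def by (simp add: msym[of x y] power2_commute mult_2)
  finally have 1: "infsum ?h {(y,x),(x,y)} = 2 * ennreal t" .
  have "infsum ?h {(y,x),(x,y)} \<le> infsum ?h UNIV"
    by (rule infsum_mono_neutral) (auto intro: nonneg_summable_on_complete)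
  then have "(ennreal t * 2) / 2 \<le> energy mu g" unfolding energy_def 1
    by (intro divide_right_mono_ennreal) (simp add: mult.commute)
  then have "ennreal t \<le> energy mu g"
    by (subst (asm) mult_divide_eq_ennreal) auto
  then have "enn2real (ennreal t) \<le> enn2real (energy mu g)"
    using assms by (intro enn2real_mono) auto
  then show ?thesis using t0 unfolding t_def by simp
qed

end


locale wgr = wg +
  fixes rho :: 'a
  assumes rhoV: "rho \<in> V"
begin

lemma sq_tri: "((a::real) - c)\<^sup>2 \<le> 2 * (a - b)\<^sup>2 + 2 * (b - c)\<^sup>2"
proof -
  have "0 \<le> ((a - b) - (b - c))\<^sup>2" by simp
  then show ?thesis by (simp add: power2_eq_square algebra_simps)
qed

lemma conn_bound:
  assumes x: "x \<in> V"
  shows "\<exists>C\<ge>0. \<forall>g. energy mu g < \<infinity> \<longrightarrow> (g rho - g x)\<^sup>2 \<le> C * enn2real (energy mu g)"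
proof -
  have "(rho, x) \<in> {(a,b). 0 < mu a b}\<^sup>*" using wg rhoV x unfolding wgraph_def by blast
  then show ?thesis
  proof (induction rule: rtrancl_induct)
    case base show ?case by (intro exI[of _ 0]) simp
  next
    case (step y z)
    from step.IH obtain C where C: "C \<ge> 0"
      "\<And>g. energy mu g < \<infinity> \<Longrightarrow> (g rho - g y)\<^sup>2 \<le> C * enn2real (energy mu g)" by blast
    have mz: "0 < mu y z" using step by simp
    show ?case
    proof (intro exI[of _ "2*C + 2/mu y z"] conjI allI impI)
      show "0 \<le> 2*C + 2/mu y z" using C mz by simp
      fix g assume g: "energy mu g < \<infinity>"
      define E where "E = enn2real (energy mu g)"
      have 1: "(g rho - g y)\<^sup>2 \<le> C * E" using C g unfolding E_def by blast
      have 2: "mu y z * (g y - g z)\<^sup>2 \<le> E" unfolding E_def by (rule edge_bound[OF g])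
      have 3: "(g y - g z)\<^sup>2 \<le> E / mu y z" using 2 mz by (simp add: pos_le_divide_eq mult.commute)
      have "(g rho - g z)\<^sup>2 \<le> 2 * (g rho - g y)\<^sup>2 + 2 * (g y - g z)\<^sup>2" by (rule sq_tri)
      also have "\<dots> \<le> 2 * (C * E) + 2 * (E / mu y z)" using 1 3 by linarith
      also have "\<dots> = (2*C + 2/mu y z) * E" by (simp add: algebra_simps)
      finally show "(g rho - g z)\<^sup>2 \<le> (2*C + 2/mu y z) * enn2real (energy mu g)"
        unfolding E_def .
    qed
  qed
qed

lemma other: "\<exists>y\<in>V. y \<noteq> rho" using wg unfolding wgraph_def by metis

lemma rho_nb: "\<exists>z. 0 < mu rho z"
proof -
  obtain y where y: "y \<in> V" "y \<noteq> rho" using other by blast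
  have "(rho, y) \<in> {(a,b). 0 < mu a b}\<^sup>*" using wg rhoV y unfolding wgraph_def by blast
  then show ?thesis using y(2) by (cases rule: converse_rtranclE) auto
qed

lemma nu_rho: "0 < nu rho" using rho_nb nu_pos by blast

lemma res_upper:
  assumes x: "x \<in> V" and g: "energy mu g < \<infinity>" "0 < energy mu g"
  shows "(g rho - g x)\<^sup>2 / enn2real (energy mu g) \<le> resistance mu rho x"
  unfolding resistance_def
proof (rule cSup_upper)
  show "(g rho - g x)\<^sup>2 / enn2real (energy mu g) \<in>
    {\<bar>f rho - f x\<bar>\<^sup>2 / enn2real (energy mu f) |f. energy mu f < \<infinity> \<and> 0 < energy mu f}"
    using g by auto
  obtain C where C: "C \<ge> 0" "\<And>f. energy mu f < \<infinity> \<Longrightarrow> (f rho - f x)\<^sup>2 \<le> C * enn2real (energy mu f)"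
    using conn_bound[OF x] by blast
  show "bdd_above {\<bar>f rho - f x\<bar>\<^sup>2 / enn2real (energy mu f) |f. energy mu f < \<infinity> \<and> 0 < energy mu f}"
  proof (rule bdd_aboveI)
    fix t assume "t \<in> {\<bar>f rho - f x\<bar>\<^sup>2 / enn2real (energy mu f) |f. energy mu f < \<infinity> \<and> 0 < energy mu f}"
    then obtain f where f: "t = (f rho - f x)\<^sup>2 / enn2real (energy mu f)" "energy mu f < \<infinity>" "0 < energy mu f"
      by auto
    have "0 < enn2real (energy mu f)" using f by (simp add: enn2real_positive_iff)
    then show "t \<le> C" using C(2)[OF f(2)] f(1) by (simp add: divide_le_eq mult.commute)
  qed
qed

lemma res_rho: "resistance mu rho rho = 0"
proof -
  define g0 where "g0 = (\<lambda>x. if x = rho then 1 else (0::real))"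
  have T: "finite (reach 1 rho)" by (rule fin_reach)
  have "energy mu g0 = ennreal ((\<Sum>x\<in>reach 1 rho \<union> {rho}. \<Sum>y\<in>reach 1 rho \<union> {rho}. mu x y * (g0 x - g0 y)\<^sup>2) / 2)"
    by (rule energy_fin) (auto simp: g0_def fin_reach fin_nb split: if_splits)
  then have fin: "energy mu g0 < \<infinity>" by simp
  obtain y where y: "y \<in> V" "y \<noteq> rho" using other by blast
  obtain C where C: "(g0 rho - g0 y)\<^sup>2 \<le> C * enn2real (energy mu g0)"
    using conn_bound[OF y(1)] fin by blast
  then have "energy mu g0 \<noteq> 0" using y(2) by (auto simp: g0_def)
  then have pos: "0 < energy mu g0" by (simp add: order_less_le)
  have "{\<bar>f rho - f rho\<bar>\<^sup>2 / enn2real (energy mu f) |f. energy mu f < \<infinity> \<and> 0 < energy mu f} = {0}"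
    using fin pos by auto
  then show ?thesis unfolding resistance_def by simp
qed

end


context wgr begin

definition c :: "nat \<Rightarrow> real" where "c n = heat_kernel mu n rho rho"
definition pk :: "nat \<Rightarrow> 'a \<Rightarrow> real" where "pk a x = heat_kernel mu a rho x"
definition W :: "nat \<Rightarrow> 'a set" where "W n = (\<Union>j\<in>{..n}. reach j rho)"

lemma W_fin: "finite (W n)" unfolding W_def by (auto simp: fin_reach)
lemma reach_W: "a \<le> n \<Longrightarrow> reach a rho \<subseteq> W n" unfolding W_def by auto
lemma W_mono: "W n \<subseteq> W (Suc n)" unfolding W_def atMost_Suc by auto
lemma W_nb: "x \<in> W n \<Longrightarrow> nb x \<subseteq> W (Suc n)"
  unfolding W_def using reach_step by fastforce

lemma sp_nu: "sp n rho x \<noteq> 0 \<Longrightarrow> 0 < nu x"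
proof (cases n)
  case 0
  then show "sp n rho x \<noteq> 0 \<Longrightarrow> 0 < nu x" using nu_rho by (auto split: if_splits)
next
  case (Suc k)
  assume "sp n rho x \<noteq> 0"
  then have "(\<Sum>z\<in>reach k rho. sp k rho z * tp z x) \<noteq> 0" using Suc sp_back by simp
  then obtain z where "sp k rho z * tp z x \<noteq> 0" by (meson sum.neutral)
  then have "tp z x \<noteq> 0" by auto
  then have "0 < mu z x" using tp0 by blast
  then show ?thesis using nu_pos msym by metis
qed

lemma pk_nu: "pk a x * nu x = sp a rho x"
proof (cases "nu x = 0")
  case True
  then have "sp a rho x = 0" using sp_nu by fastforce
  then show ?thesis using True by simp
qed (simp add: pk_def heat_kernel_def)

lemma pk_supp: "pk a x \<noteq> 0 \<Longrightarrow> x \<in> reach a rho"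
  using sp_supp by (fastforce simp: pk_def heat_kernel_def)

lemma rev_div: "0 < nu x \<Longrightarrow> sp b rho x / nu x = sp b x rho / nu rho"
  using rev[of x b rho] nu_rho by (simp add: field_simps)

lemma pk_rev: "sp a rho x * pk b x = sp a rho x * sp b x rho / nu rho"
proof (cases "sp a rho x = 0")
  case False
  then have "0 < nu x" by (rule sp_nu)
  then show ?thesis using rev_div by (simp add: pk_def heat_kernel_def)
qed simp

lemma ipI:
  assumes "reach a rho \<subseteq> T" "finite T"
  shows "(\<Sum>x\<in>T. pk a x * pk b x * nu x) = c (a+b)"
proof -
  have "(\<Sum>x\<in>T. pk a x * pk b x * nu x) = (\<Sum>x\<in>T. sp a rho x * sp b x rho / nu rho)"
    by (rule sum.cong[OF refl]) (metis pk_nu pk_rev mult.commute mult.left_commute)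
  also have "\<dots> = (\<Sum>x\<in>reach a rho. sp a rho x * sp b x rho / nu rho)"
    by (rule sum.mono_neutral_right) (use assms sp_supp in auto)
  also have "\<dots> = (\<Sum>x\<in>reach a rho. sp a rho x * sp b x rho) / nu rho"
    by (simp add: sum_divide_distrib)
  also have "\<dots> = c (a+b)" by (simp add: c_def heat_kernel_def ck)
  finally show ?thesis .
qed

lemma Pstep: "(\<Sum>y\<in>nb x. mu x y * pk b y) = nu x * pk (Suc b) x"
proof (cases "nu x = 0")
  case True
  then have "nb x = {}" using nu_pos by fastforce
  then show ?thesis using True by simp
next
  case False
  have "(\<Sum>y\<in>nb x. mu x y * pk b y) = (\<Sum>y\<in>nb x. nu x * tp x y * sp b y rho) / nu rho"
    unfolding sum_divide_distrib
  proof (rule sum.cong[OF refl])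
    fix y assume "y \<in> nb x"
    then have "0 < nu y" using nu_pos msym by fastforce
    then have "pk b y = sp b y rho / nu rho" using rev_div by (simp add: pk_def heat_kernel_def)
    then show "mu x y * pk b y = nu x * tp x y * sp b y rho / nu rho" by (simp add: nu_tp)
  qed
  also have "\<dots> = nu x * sp (Suc b) x rho / nu rho"
    by (simp add: sum_distrib_left mult.assoc)
  also have "\<dots> = sp (Suc b) rho x"
    using rev[of x "Suc b" rho] nu_rho by simp
  also have "\<dots> = nu x * pk (Suc b) x" using pk_nu by (simp add: mult.commute)
  finally show ?thesis .
qed

lemma pfII:
  assumes "reach a rho \<subseteq> S" "S \<subseteq> T" "finite T" "\<And>x. x \<in> S \<Longrightarrow> nb x \<subseteq> T"
  shows "pf T (pk a) (pk b) = c (a + Suc b)"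
proof -
  have "pf T (pk a) (pk b) = (\<Sum>x\<in>T. pk a x * pk (Suc b) x * nu x)"
    unfolding pf_def
  proof (rule sum.cong[OF refl])
    fix x assume x: "x \<in> T"
    show "(\<Sum>y\<in>T. mu x y * pk a x * pk b y) = pk a x * pk (Suc b) x * nu x"
    proof (cases "pk a x = 0")
      case False
      then have "nb x \<subseteq> T" using pk_supp assms by blast
      then have "(\<Sum>y\<in>T. mu x y * pk b y) = (\<Sum>y\<in>nb x. mu x y * pk b y)"
        by (intro sum.mono_neutral_right) (auto simp: assms m0)
      then have "(\<Sum>y\<in>T. mu x y * pk b y) = nu x * pk (Suc b) x" using Pstep by simp
      moreover have "(\<Sum>y\<in>T. mu x y * pk a x * pk b y) = pk a x * (\<Sum>y\<in>T. mu x y * pk b y)"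
        by (simp add: sum_distrib_left mult_ac)
      ultimately show ?thesis by simp
    qed simp
  qed
  also have "\<dots> = c (a + Suc b)" using assms by (intro ipI) auto
  finally show ?thesis .
qed

lemma comb:
  fixes \<alpha> \<beta> :: real
  assumes ab: "a \<le> n" "b \<le> n"
  defines "u \<equiv> (\<lambda>x. \<alpha> * pk a x + \<beta> * pk b x)"
  shows "ip (W (Suc n)) u u = \<alpha>*\<alpha>*c(a+a) + 2*\<alpha>*\<beta>*c(a+b) + \<beta>*\<beta>*c(b+b)"
    and "pf (W (Suc n)) u u = \<alpha>*\<alpha>*c(a+Suc a) + 2*\<alpha>*\<beta>*c(a+Suc b) + \<beta>*\<beta>*c(b+Suc b)"
    and "\<And>x. u x \<noteq> 0 \<Longrightarrow> x \<in> W (Suc n) \<and> nb x \<subseteq> W (Suc n)"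
proof -
  let ?T = "W (Suc n)"
  have rT: "reach a rho \<subseteq> ?T" "reach b rho \<subseteq> ?T"
    using reach_W[of a "Suc n"] reach_W[of b "Suc n"] ab by auto
  have "ip ?T u u = \<alpha>*\<alpha>*(\<Sum>x\<in>?T. pk a x * pk a x * nu x) + 2*\<alpha>*\<beta>*(\<Sum>x\<in>?T. pk a x * pk b x * nu x)
      + \<beta>*\<beta>*(\<Sum>x\<in>?T. pk b x * pk b x * nu x)"
    unfolding ip_def u_def by (simp add: sum.distrib sum_distrib_left algebra_simps)
  also have "\<dots> = \<alpha>*\<alpha>*c(a+a) + 2*\<alpha>*\<beta>*c(a+b) + \<beta>*\<beta>*c(b+b)"
    using rT by (simp add: ipI W_fin)
  finally show "ip ?T u u = \<alpha>*\<alpha>*c(a+a) + 2*\<alpha>*\<beta>*c(a+b) + \<beta>*\<beta>*c(b+b)" .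
  have pk: "pf ?T (pk a') (pk b') = c (a' + Suc b')" if "a' \<le> n" for a' b'
    using reach_W[of a' n] that W_mono W_fin W_nb by (intro pfII[where S="W n"]) auto
  have "pf ?T u u = \<alpha>*\<alpha>*pf ?T (pk a) (pk a) + \<alpha>*\<beta>*pf ?T (pk a) (pk b)
      + \<beta>*\<alpha>*pf ?T (pk b) (pk a) + \<beta>*\<beta>*pf ?T (pk b) (pk b)"
    unfolding pf_def u_def by (simp add: sum.distrib sum_distrib_left algebra_simps)
  also have "\<dots> = \<alpha>*\<alpha>*c(a+Suc a) + 2*\<alpha>*\<beta>*c(a+Suc b) + \<beta>*\<beta>*c(b+Suc b)"
    using ab by (simp add: pk algebra_simps)
  finally show "pf ?T u u = \<alpha>*\<alpha>*c(a+Suc a) + 2*\<alpha>*\<beta>*c(a+Suc b) + \<beta>*\<beta>*c(b+Suc b)" .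
  fix x assume "u x \<noteq> 0"
  then have "pk a x \<noteq> 0 \<or> pk b x \<noteq> 0" unfolding u_def by auto
  then have "x \<in> W n" using pk_supp reach_W ab by blast
  then show "x \<in> ?T \<and> nb x \<subseteq> ?T" using W_mono W_nb by blast
qed

end


context wg begin
lemma sp_mass: "finite F \<Longrightarrow> (\<Sum>x\<in>F. sp n y x) \<le> 1"
proof (induction n arbitrary: y)
  case 0 then show ?case by (simp add: sum.delta')
next
  case (Suc n)
  have "(\<Sum>x\<in>F. sp (Suc n) y x) = (\<Sum>z\<in>nb y. tp y z * (\<Sum>x\<in>F. sp n z x))"
    by (simp add: sum_distrib_left sum.swap[of _ F])
  also have "\<dots> \<le> (\<Sum>z\<in>nb y. tp y z)"
    by (rule sum_mono) (use Suc tp_nn in \<open>auto intro: mult_left_le\<close>)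
  also have "\<dots> = (\<Sum>z\<in>nb y. mu y z) / nu y" unfolding trans_prob_def by (simp add: sum_divide_distrib)
  also have "\<dots> \<le> 1" unfolding vweight_def by (simp add: divide_le_eq_1)
  finally show ?case .
qed
end

context wgr begin

definition d :: "nat \<Rightarrow> real" where "d k = c (2*k) + c (Suc (2*k))"
definition dl :: "nat \<Rightarrow> real" where "dl k = d k - d (Suc k)"

lemma d_nn: "0 \<le> d k"
proof -
  let ?u = "\<lambda>x. (1::real) * pk k x + 0 * pk k x"
  have s: "\<And>x. ?u x \<noteq> 0 \<Longrightarrow> x \<in> W (Suc k) \<and> nb x \<subseteq> W (Suc k)"
    by (rule comb(3)[OF le_refl le_refl])
  have "0 \<le> ip (W (Suc k)) ?u ?u + pf (W (Suc k)) ?u ?u"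
    by (rule form_nn(2)[OF W_fin]) (use s in blast)
  also have "\<dots> = d k"
  proof -
    have i: "k + k = 2*k" "k + Suc k = Suc (2*k)" by simp_all
    show ?thesis unfolding comb(1,2)[OF le_refl le_refl] d_def i by simp
  qed
  finally show ?thesis .
qed

lemma dl_mono: "dl (Suc k) \<le> dl k"
proof -
  let ?u = "\<lambda>x. (1::real) * pk k x + (-1) * pk (Suc (Suc k)) x"
  have le: "k \<le> Suc (Suc k)" by simp
  have s: "\<And>x. ?u x \<noteq> 0 \<Longrightarrow> x \<in> W (Suc (Suc (Suc k))) \<and> nb x \<subseteq> W (Suc (Suc (Suc k)))"
    by (rule comb(3)[OF le le_refl])
  have "0 \<le> ip (W (Suc (Suc (Suc k)))) ?u ?u + pf (W (Suc (Suc (Suc k)))) ?u ?u"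
    by (rule form_nn(2)[OF W_fin]) (use s in blast)
  also have "\<dots> = dl k - dl (Suc k)"
  proof -
    have i: "k+k = 2*k" "k + Suc k = Suc (2*k)" "k + Suc (Suc k) = 2*Suc k"
      "k + Suc(Suc(Suc k)) = Suc (2*Suc k)" "Suc(Suc k) + Suc(Suc k) = 2*Suc(Suc k)"
      "Suc(Suc k) + Suc(Suc(Suc k)) = Suc(2*Suc(Suc k))" by simp_all
    have alg: "\<And>A B C D::real. 1/2*(1/2)*A + 2*(1/2)*(1/2)*B + 1/2*(1/2)*C
       - (1/2*(1/2)*B + 2*(1/2)*(1/2)*C + 1/2*(1/2)*D) = (A + B - (C + D))/4"
      by (simp add: field_simps)
    show ?thesis unfolding comb(1,2)[OF le le_refl] dl_def d_def i by (simp add: algebra_simps)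
  qed
  finally show ?thesis by simp
qed

lemma qk_pk: "qkernel mu n rho x = (1/2) * pk n x + (1/2) * pk (Suc n) x"
  by (simp add: qkernel_def pk_def)

lemma energy_q:
  "energy mu (qkernel mu (2*m) rho) < \<infinity> \<and> enn2real (energy mu (qkernel mu (2*m) rho)) = dl (2*m) / 4"
proof -
  let ?n = "Suc (2*m)"
  let ?u = "\<lambda>x. (1/2::real) * pk (2*m) x + (1/2) * pk (Suc (2*m)) x"
  have le: "2*m \<le> ?n" by simp
  have u: "qkernel mu (2*m) rho = ?u" using qk_pk by auto
  have supp: "\<And>x. ?u x \<noteq> 0 \<Longrightarrow> x \<in> W (Suc ?n) \<and> nb x \<subseteq> W (Suc ?n)"
    by (rule comb(3)[OF le le_refl])
  have E: "energy mu ?u = ennreal ((\<Sum>x\<in>W (Suc ?n). \<Sum>y\<in>W (Suc ?n). mu x y * (?u x - ?u y)\<^sup>2) / 2)"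
    by (rule energy_fin[OF W_fin supp])
  have F: "ip (W (Suc ?n)) ?u ?u - pf (W (Suc ?n)) ?u ?u
      = (\<Sum>x\<in>W (Suc ?n). \<Sum>y\<in>W (Suc ?n). mu x y * (?u x - ?u y)\<^sup>2) / 2"
    by (rule form(1)[OF W_fin]) (use supp in blast)
  have nn: "0 \<le> (\<Sum>x\<in>W (Suc ?n). \<Sum>y\<in>W (Suc ?n). mu x y * (?u x - ?u y)\<^sup>2) / 2"
    by (auto intro!: sum_nonneg mult_nonneg_nonneg mnn)
  have G: "ip (W (Suc ?n)) ?u ?u - pf (W (Suc ?n)) ?u ?u = dl (2*m) / 4"
  proof -
    have i: "2*m + 2*m = 2*(2*m)" "2*m + Suc (2*m) = Suc (2*(2*m))" "2*m + Suc(Suc(2*m)) = 2*Suc(2*m)"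
      "Suc (2*m) + Suc (2*m) = 2*Suc(2*m)" "Suc(2*m) + Suc(Suc(2*m)) = Suc(2*Suc(2*m))" by simp_all
    have alg: "\<And>A B C D::real. 1/2*(1/2)*A + 2*(1/2)*(1/2)*B + 1/2*(1/2)*C
       - (1/2*(1/2)*B + 2*(1/2)*(1/2)*C + 1/2*(1/2)*D) = (A + B - (C + D))/4"
      by (simp add: field_simps)
    show ?thesis unfolding comb(1,2)[OF le le_refl] dl_def d_def i by (simp add: algebra_simps)
  qed
  show ?thesis unfolding u E using F G nn by simp
qed

lemma dl_tele: "(\<Sum>j=k..<k'. dl j) = d k - d k'" if "k \<le> k'"
  using sum_Suc_diff'[OF that, of "\<lambda>i. - d i"] by (simp add: dl_def)

lemma key: "1 \<le> m \<Longrightarrow> real m * dl (2*m) \<le> d m"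
proof -
  assume m: "1 \<le> m"
  have "real m * dl (2*m) = (\<Sum>j=m..<2*m. dl (2*m))" by simp
  also have "\<dots> \<le> (\<Sum>j=m..<2*m. dl j)"
    by (rule sum_mono) (auto intro: lift_Suc_antimono_le[of dl, OF dl_mono])
  also have "\<dots> = d m - d (2*m)" by (rule dl_tele) simp
  also have "\<dots> \<le> d m" using d_nn by simp
  finally show ?thesis .
qed

end


context wgr begin

lemma main:
  assumes m: "1 \<le> m"
  shows "qkernel mu (2*m) rho rho \<le> 3 * h_inv V mu rho (real m) / real m"
proof -
  define u where "u = qkernel mu (2*m) rho"
  define q where "q = u rho"
  define E where "E = enn2real (energy mu u)"
  have mpos: "0 < real m" using m by simp
  have q_d: "q = d m / 2" unfolding q_def u_def qk_pk pk_def d_def c_def by simp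
  have q0: "0 \<le> q" using d_nn[of m] q_d by simp
  have Efin: "energy mu u < \<infinity>" and E_dl: "E = dl (2*m) / 4"
    using energy_q[of m] unfolding u_def E_def by auto
  have K: "real m * dl (2*m) \<le> d m" using key m .
  have "E * (2 * real m) = real m * dl (2*m) / 2" using E_dl by simp
  also have "\<dots> \<le> q" using K q_d by simp
  finally have E_le: "E \<le> q / (2 * real m)" using mpos by (simp add: pos_le_divide_eq)
  have E0: "0 \<le> E" unfolding E_def by simp
  define r0 where "r0 = real m * q / 3"
  have r0: "0 \<le> r0" using q0 by (simp add: r0_def)
  have mem: "ennreal r0 * ball_vol V mu rho r0 \<le> ennreal (real m)"
  proof (cases "q = 0")
    case True then show ?thesis by (simp add: r0_def)
  next
    case False
    then have qp: "0 < q" using q0 by simp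
    have pt: "q/2 \<le> u x" if x: "x \<in> V" "resistance mu rho x \<le> r0" for x
    proof -
      have sq: "(u rho - u x)\<^sup>2 \<le> r0 * E"
      proof (cases "energy mu u = 0")
        case True
        obtain C where "(u rho - u x)\<^sup>2 \<le> C * enn2real (energy mu u)"
          using conn_bound[OF x(1)] Efin by blast
        then show ?thesis using True r0 E_def by simp
      next
        case False
        then have pos: "0 < energy mu u" by (simp add: zero_less_iff_neq_zero)
        have "(u rho - u x)\<^sup>2 / E \<le> resistance mu rho x"
          using res_upper[OF x(1) Efin pos] E_def by simp
        moreover have "0 < E" using pos Efin by (simp add: E_def enn2real_positive_iff)
        ultimately have "(u rho - u x)\<^sup>2 \<le> resistance mu rho x * E" by (simp add: divide_le_eq)
        also have "\<dots> \<le> r0 * E" using x(2) E0 by (rule mult_right_mono)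
        finally show ?thesis .
      qed
      have "r0 * E \<le> r0 * (q / (2 * real m))" using E_le r0 by (rule mult_left_mono)
      also have "\<dots> = q * q / 6" using mpos by (simp add: r0_def field_simps)
      also have "\<dots> \<le> (q/2)\<^sup>2"
      proof -
        have "0 \<le> q * q" by simp
        then show ?thesis by (simp add: power2_eq_square)
      qed
      finally have "(q - u x)\<^sup>2 \<le> (q/2)\<^sup>2" using sq q_def by simp
      then have "q - u x \<le> q/2" by (rule power2_le_imp_le) (use q0 in simp)
      then show ?thesis by simp
    qed
    have mass: "(\<Sum>x\<in>F. u x * nu x) \<le> 1" if F: "finite F" for F
    proof -
      have "(\<Sum>x\<in>F. u x * nu x) = (\<Sum>x\<in>F. sp (2*m) rho x) / 2 + (\<Sum>x\<in>F. sp (Suc (2*m)) rho x) / 2"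
        unfolding sum_divide_distrib sum.distrib[symmetric]
      proof (rule sum.cong[OF refl])
        fix x
        have "u x * nu x = (pk (2*m) x * nu x)/2 + (pk (Suc (2*m)) x * nu x)/2"
          by (simp add: u_def qk_pk algebra_simps)
        then show "u x * nu x = sp (2*m) rho x / 2 + sp (Suc (2*m)) rho x / 2"
          unfolding pk_nu .
      qed
      also have "\<dots> \<le> 1/2 + 1/2" using sp_mass[OF F, of "2*m" rho] sp_mass[OF F, of "Suc (2*m)" rho]
        by linarith
      finally show ?thesis by simp
    qed
    have vol: "ball_vol V mu rho r0 \<le> ennreal (2/q)"
      unfolding ball_vol_def gmeasure_def
    proof (rule infsum_le_finite_sums)
      show "(\<lambda>x. ennreal (nu x)) summable_on {x \<in> V. resistance mu rho x \<le> r0}"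
        by (rule nonneg_summable_on_complete) simp
      fix F assume F: "finite F" "F \<subseteq> {x \<in> V. resistance mu rho x \<le> r0}"
      have "(\<Sum>x\<in>F. q/2 * nu x) \<le> (\<Sum>x\<in>F. u x * nu x)"
      proof (rule sum_mono)
        fix x assume "x \<in> F"
        then have "q/2 \<le> u x" using pt F by blast
        then show "q/2 * nu x \<le> u x * nu x" using nu_nn by (rule mult_right_mono)
      qed
      then have "q/2 * (\<Sum>x\<in>F. nu x) \<le> 1" using mass[OF F(1)] by (simp add: sum_distrib_left)
      then have S: "(\<Sum>x\<in>F. nu x) \<le> 2/q" using qp by (simp add: field_simps)
      have "(\<Sum>x\<in>F. ennreal (nu x)) = ennreal (\<Sum>x\<in>F. nu x)"
        by (rule sum_ennreal) (simp add: nu_nn)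
      also have "\<dots> \<le> ennreal (2/q)" using S by (rule ennreal_leI)
      finally show "(\<Sum>x\<in>F. ennreal (nu x)) \<le> ennreal (2/q)" .
    qed
    have "ennreal r0 * ball_vol V mu rho r0 \<le> ennreal r0 * ennreal (2/q)"
      by (rule mult_left_mono[OF vol]) simp
    also have "\<dots> = ennreal (r0 * (2/q))" using r0 q0 by (subst ennreal_mult) auto
    also have "r0 * (2/q) = 2 * real m / 3" using qp by (simp add: r0_def field_simps)
    also have "ennreal (2 * real m / 3) \<le> ennreal (real m)" by (rule ennreal_leI) simp
    finally show ?thesis .
  qed
  have bdd: "bdd_above {r. 0 \<le> r \<and> ennreal r * ball_vol V mu rho r \<le> ennreal (real m)}"
  proof (rule bdd_aboveI[where M = "real m / nu rho"])
    fix r assume "r \<in> {r. 0 \<le> r \<and> ennreal r * ball_vol V mu rho r \<le> ennreal (real m)}"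
    then have r: "0 \<le> r" "ennreal r * ball_vol V mu rho r \<le> ennreal (real m)" by auto
    have "ennreal (nu rho) \<le> ball_vol V mu rho r"
    proof -
      have "ennreal (nu rho) = infsum (\<lambda>x. ennreal (nu x)) {rho}" by simp
      also have "\<dots> \<le> infsum (\<lambda>x. ennreal (nu x)) {x\<in>V. resistance mu rho x \<le> r}"
        by (rule infsum_mono_neutral) (auto intro: nonneg_summable_on_complete simp: rhoV res_rho r)
      finally show ?thesis unfolding ball_vol_def gmeasure_def .
    qed
    then have "ennreal r * ennreal (nu rho) \<le> ennreal (real m)"
      using r by (meson mult_left_mono order_trans zero_le)
    then have "ennreal (r * nu rho) \<le> ennreal (real m)" using r nu_nn by (simp add: ennreal_mult)
    then have "r * nu rho \<le> real m" by (simp add: ennreal_le_iff)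
    then show "r \<le> real m / nu rho" using nu_rho by (simp add: pos_le_divide_eq)
  qed
  have "r0 \<le> h_inv V mu rho (real m)" unfolding h_inv_def
    by (rule cSup_upper) (use r0 mem bdd in auto)
  then show ?thesis using mpos unfolding r0_def q_def u_def by (simp add: field_simps)
qed

end

theorem lemma4p3:
  fixes V :: "'a set" and mu :: "'a \<Rightarrow> 'a \<Rightarrow> real" and \<rho> :: 'a and m :: nat
  assumes "wgraph V mu" and "\<rho> \<in> V" and "1 \<le> m"
  shows "qkernel mu (2 * m) \<rho> \<rho> \<le> 3 * h_inv V mu \<rho> (real m) / real m"
proof -
  interpret wgr V mu \<rho> by unfold_locales (rule assms)+
  show ?thesis by (rule main[OF assms(3)])
qed


end
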